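(* For every BIMS channel with capacity $C$ and every $\rho>-1$, $$-\log F^{\rm bsc}(\rho;C)\le E_0(\rho)\le -\log F^{\rm bec}(\rho;C).$$ In particular, the cutoff rate $R_0=E_0(1)$ satisfies $$-\log\Bigl(\tfrac12\bigl(\sqrt{\varepsilon}+\sqrt{1-\varepsilon}\bigr)^2\Bigr)\le R_0\le -\log\frac{1+(1-C)}{2},\qquad \varepsilon=h^{-1}(1-C),$$ with equality on the left for the BSC and on the right for the BEC.
   Context: A BIMS (binary-input memoryless symmetric) channel is a memoryless channel with input alphabet $\{x_0,x_1\}$, finite output alphabet $\mathcal Y$ and transition probabilities $P_{Y|X}(y|x)$. It is symmetric in Gallager's sense: the columns of the $2\times|\mathcal Y|$ transition matrix (rows indexed by inputs) can be partitioned into submatrices such that, in each submatrix, every row is a permutation of every other row and every column is a permutation of every other column. Inputs are equiprobable and logarithms are base 2. The capacity $C$ is $I(X;Y)$ under equiprobable inputs. For $\rho>-1$, $$F(\rho)=\sum_{x}\tfrac12\sum_{y:\,P_{Y|X}(y|x)>0}P_{Y|X}(y|x)\left(\frac{\tfrac12\sum_{x'}P_{Y|X}(y|x')^{1/(1+\rho)}}{P_{Y|X}(y|x)^{1/(1+\rho)}}\right)^{\rho},$$ and $E_0(\rho)=-\log F(\rho)$. $h$ is the binary entropy function and $h^{-1}$ its inverse on $[0,\tfrac12]$. Define $$F^{\rm bec}(\rho;C)=1+(2^{-\rho}-1)C,$$ $$F^{\rm bsc}(\rho;C)=2^{-\rho}\bigl(\varepsilon^{1/(1+\rho)}+(1-\varepsilon)^{1/(1+\rho)}\bigr)^{1+\rho},\qquad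 \varepsilon=h^{-1}(1-C).$$ *)

theory Defs
  imports "HOL-Analysis.Analysis" "HOL-Library.Disjoint_Sets"
begin

(* Binary input alphabet {x0,x1} is modelled by bool; W x y = P_{Y|X}(y|x);
   the finite output alphabet is the finite set Y. *)

definition gallager_symmetric :: "(bool \<Rightarrow> 'y \<Rightarrow> real) \<Rightarrow> 'y set \<Rightarrow> bool" where
  "gallager_symmetric W Y \<longleftrightarrow>
     (\<exists>P. partition_on Y P \<and>
       (\<forall>B\<in>P.
          (\<comment> \<open>every row of the submatrix is a permutation of every other row\<close>
           \<forall>x x'. \<exists>\<sigma>. bij_betw \<sigma> B B \<and> (\<forall>y\<in>B. W x' (\<sigma> y) = W x y)) \<and>
          (\<comment> \<open>every column of the submatrix is a permutation of every other column\<close>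
           \<forall>y\<in>B. \<forall>y'\<in>B. \<exists>\<tau>::bool \<Rightarrow> bool. bij \<tau> \<and> (\<forall>x. W (\<tau> x) y' = W x y))))"

definition bims :: "(bool \<Rightarrow> 'y \<Rightarrow> real) \<Rightarrow> 'y set \<Rightarrow> bool" where
  "bims W Y \<longleftrightarrow> finite Y \<and> Y \<noteq> {} \<and>
     (\<forall>x. \<forall>y\<in>Y. W x y \<ge> 0) \<and> (\<forall>x. (\<Sum>y\<in>Y. W x y) = 1) \<and>
     gallager_symmetric W Y"

definition out_prob :: "(bool \<Rightarrow> 'y \<Rightarrow> real) \<Rightarrow> 'y \<Rightarrow> real" where
  "out_prob W y = (1/2) * (\<Sum>x'\<in>UNIV. W x' y)"

(* capacity C = I(X;Y) with equiprobable inputs, logs base 2 *)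
definition capacity :: "(bool \<Rightarrow> 'y \<Rightarrow> real) \<Rightarrow> 'y set \<Rightarrow> real" where
  "capacity W Y = (\<Sum>x\<in>UNIV. (1/2) * (\<Sum>y\<in>{y\<in>Y. W x y > 0}.
       W x y * log 2 (W x y / out_prob W y)))"

definition Ffun :: "(bool \<Rightarrow> 'y \<Rightarrow> real) \<Rightarrow> 'y set \<Rightarrow> real \<Rightarrow> real" where
  "Ffun W Y \<rho> = (\<Sum>x\<in>UNIV. (1/2) * (\<Sum>y\<in>{y\<in>Y. W x y > 0}.
       W x y * (((1/2) * (\<Sum>x'\<in>UNIV. W x' y powr (1/(1+\<rho>)))) / W x y powr (1/(1+\<rho>))) powr \<rho>))"

definition E0 :: "(bool \<Rightarrow> 'y \<Rightarrow> real) \<Rightarrow> 'y set \<Rightarrow> real \<Rightarrow> real" where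
  "E0 W Y \<rho> = - log 2 (Ffun W Y \<rho>)"

definition bin_entropy :: "real \<Rightarrow> real" where
  "bin_entropy p = (if p = 0 \<or> p = 1 then 0 else - p * log 2 p - (1 - p) * log 2 (1 - p))"

definition bin_entropy_inv :: "real \<Rightarrow> real" where
  "bin_entropy_inv c = (THE e. 0 \<le> e \<and> e \<le> 1/2 \<and> bin_entropy e = c)"

definition F_bec :: "real \<Rightarrow> real \<Rightarrow> real" where
  "F_bec \<rho> C = 1 + (2 powr (-\<rho>) - 1) * C"

definition F_bsc :: "real \<Rightarrow> real \<Rightarrow> real" where
  "F_bsc \<rho> C = (let \<epsilon> = bin_entropy_inv (1 - C) in
     2 powr (-\<rho>) * (\<epsilon> powr (1/(1+\<rho>)) + (1 - \<epsilon>) powr (1/(1+\<rho>))) powr (1+\<rho>))"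

definition bsc :: "real \<Rightarrow> bool \<Rightarrow> bool \<Rightarrow> real" where
  "bsc p x y = (if x = y then 1 - p else p)"

(* binary erasure channel with erasure probability e; None is the erasure symbol *)
definition bec :: "real \<Rightarrow> bool \<Rightarrow> bool option \<Rightarrow> real" where
  "bec e x y = (case y of None \<Rightarrow> e | Some b \<Rightarrow> (if b = x then 1 - e else 0))"

end

theory Submission
  imports Defs "HOL-Real_Asymp.Real_Asymp"
begin

lemma aux1: fixes u::real assumes "u \<ge> 1" shows "2 * ln u \<le> u - 1/u"
proof -
  have "(\<lambda>u. u - 1/u - 2 * ln u) 1 \<le> (\<lambda>u. u - 1/u - 2 * ln u) u"
  proof (rule DERIV_nonneg_imp_nondecreasing[OF assms])
    fix x :: real assume x: "1 \<le> x" "x \<le> u"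
    show "\<exists>y. ((\<lambda>u. u - 1/u - 2 * ln u) has_real_derivative y) (at x) \<and> 0 \<le> y"
      apply (rule exI[of _ "1 + 1/x^2 - 2/x"])
      apply (intro conjI)
      using x apply (auto intro!: derivative_eq_intros simp: power2_eq_square field_simps)[1]
      proof -
        have "1 + 1/x^2 - 2/x = (1 - 1/x)^2" using x by (simp add: power2_eq_square field_simps)
        thus "0 \<le> 1 + 1/x^2 - 2/x" by simp
      qed
  qed
  thus ?thesis by simp
qed

lemma aux2: fixes z::real assumes "z \<le> 0" shows "0 \<le> 2 * exp z - 2 - z - z * exp z"
proof -
  have "(\<lambda>z. 2 * exp z - 2 - z - z * exp z) 0 \<le> (\<lambda>z. 2 * exp z - 2 - z - z * exp z) z"
  proof (rule DERIV_nonpos_imp_nonincreasing[OF assms])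
    fix x :: real assume x: "z \<le> x" "x \<le> 0"
    have "1 - x \<le> exp (-x)" using exp_ge_add_one_self[of "-x"] by simp
    hence "exp x * (1 - x) \<le> 1" by (simp add: exp_minus field_simps)
    thus "\<exists>y. ((\<lambda>z. 2 * exp z - 2 - z - z * exp z) has_real_derivative y) (at x) \<and> y \<le> 0"
      apply (intro exI[of _ "exp x - 1 - x * exp x"] conjI)
       apply (auto intro!: derivative_eq_intros simp: algebra_simps)[1]
      by (simp add: algebra_simps)
  qed
  thus ?thesis by simp
qed

lemma KL_alg1: "((a::real) - 1) * (b + 1) - z * (a + b) = b * (a - 1 - z) + a * (1 - z) - 1"
  by (simp add: algebra_simps)
lemma KL_alg2: "(a::real)*(a - 1 - z) + a*(1-z) - 1 = a*a - 2*z*a - 1"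
  by (simp add: algebra_simps)
lemma KL_alg3: "1*((a::real) - 1 - z) + a * (1 - z) - 1 = 2 * a - 2 - z - z * a"
  by (simp add: algebra_simps)

lemma KL: fixes z w :: real assumes "z \<le> w" "0 \<le> w"
  shows "z * (exp z + exp w) \<le> (exp z - 1) * (exp w + 1)"
proof -
  have e: "0 \<le> exp z - 1 - z" using exp_ge_add_one_self[of z] by linarith
  note key = KL_alg1[of "exp z" "exp w" z]
  show ?thesis
  proof (cases "z \<ge> 0")
    case True
    have "exp z \<le> exp w" using assms by simp
    hence f1: "exp z * (exp z - 1 - z) \<le> exp w * (exp z - 1 - z)" using e by (rule mult_right_mono)
    have "2 * ln (exp z) \<le> exp z - 1 / exp z" by (rule aux1) (use True in simp)
    hence "2 * z \<le> exp z - 1 / exp z" by simp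
    hence "2 * z * exp z \<le> (exp z - 1 / exp z) * exp z" by (rule mult_right_mono) simp
    hence f2: "2 * z * exp z \<le> exp z * exp z - 1" by (simp add: left_diff_distrib)
    show ?thesis using key f1 f2 KL_alg2[of "exp z" z] by linarith
  next
    case False
    have "1 \<le> exp w" using assms by simp
    hence f1: "1 * (exp z - 1 - z) \<le> exp w * (exp z - 1 - z)" using e by (rule mult_right_mono)
    have f2: "0 \<le> 2 * exp z - 2 - z - z * exp z" by (rule aux2) (use False in simp)
    show ?thesis using key f1 f2 KL_alg3[of "exp z" z] by linarith
  qed
qed

lemma Qy_alg: fixes P ea eb y s r :: real assumes "y \<noteq> 0" "1+ea \<noteq> 0" "s \<noteq> 0" "r = (1-s)/s"
  shows "((r * (P/(1+ea)) * (ea * s) * (eb-1) + eb*(s-1)*P)*y - P*(eb-1))/(y*y)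
       = P*((s-1)*y*ea + (s-1)*y*eb - eb - eb*ea + 1 + ea)/(y^2*(1+ea))"
proof -
  have "r * (P/(1+ea)) * (ea * s) * (eb-1) = (r * s) * P*ea*(eb-1)/(1+ea)" by simp
  also have "r * s = 1 - s" using assms(3,4) by simp
  finally have 1: "r * (P/(1+ea)) * (ea * s) * (eb-1) = (1-s) * P*ea*(eb-1)/(1+ea)" .
  show ?thesis unfolding 1 using assms(1-3)
    by (simp add: field_simps power2_eq_square)
qed

definition Qy :: "real \<Rightarrow> real \<Rightarrow> real \<Rightarrow> real" where
  "Qy s r y = (1 + exp (s*y)) powr r * (exp ((s-1)*y) - 1) / y"

lemma Qy_deriv: assumes s: "s > 0" and y: "y > 0" and r: "r * s = 1 - s"
  shows "(Qy s r has_real_derivative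
     ((1 + exp (s*y)) powr r * ((s-1)*y * exp (s*y) + (s-1)*y * exp ((s-1)*y) - exp ((s-1)*y) - exp ((s-1)*y + s*y) + 1 + exp (s*y)) / (y^2 * (1 + exp (s*y))))) (at y)"
proof -
  have p: "0 < 1 + exp (s*y)" by (smt (verit) exp_gt_zero)
  have pd: "(1 + exp (s*y)) powr (r-1) = (1 + exp (s*y)) powr r / (1 + exp(s*y))"
    using p by (simp add: powr_diff)
  have rr: "r = (1-s)/s" using r s by (simp add: field_simps)
  show ?thesis unfolding Qy_def[abs_def]
    apply (auto intro!: derivative_eq_intros)
    apply (rule p)
    using y apply simp
    unfolding pd exp_add
    by (rule Qy_alg[OF _ _ _ rr]) (use p y s in auto)
qed
lemma E_gen: "z*(a+b) \<le> (a-1)*(b+1) \<Longrightarrow> z*b + z*a - a - a*b + 1 + b \<le> (0::real)"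
  by (simp add: algebra_simps)

lemma Qy_antimono: assumes s: "s > 0" and r: "r * s = 1 - s" and y: "0 < y1" "y1 \<le> y2"
  shows "Qy s r y2 \<le> Qy s r y1"
proof (rule DERIV_nonpos_imp_nonincreasing[OF y(2)])
  fix y assume yy: "y1 \<le> y" "y \<le> y2"
  hence y0: "y > 0" using y by simp
  let ?z = "(s-1)*y" and ?w = "s*y"
  have kl: "?z * (exp ?z + exp ?w) \<le> (exp ?z - 1) * (exp ?w + 1)"
  proof (rule KL)
    show "(s-1)*y \<le> s*y" using y0 by (simp add: algebra_simps)
    show "0 \<le> s*y" using s y0 by simp
  qed
  have E: "(s-1)*y * exp (s*y) + (s-1)*y * exp ((s-1)*y) - exp ((s-1)*y) - exp ((s-1)*y + s*y) + 1 + exp (s*y) \<le> 0"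
    unfolding exp_add by (rule E_gen[OF kl])
  have p: "0 < 1 + exp (s*y)" by (smt (verit) exp_gt_zero)
  show "\<exists>d. (Qy s r has_real_derivative d) (at y) \<and> d \<le> 0"
    apply (rule exI, rule conjI, rule Qy_deriv[OF s y0 r])
    apply (rule divide_nonpos_pos)
     apply (rule mult_nonneg_nonpos)
      apply (rule powr_ge_zero)
     apply (rule E)
    using p y0 by simp
qed


definition fb :: "real \<Rightarrow> real \<Rightarrow> real" where
  "fb \<rho> p = 2 powr (-\<rho>) * (p powr (1/(1+\<rho>)) + (1-p) powr (1/(1+\<rho>))) powr (1+\<rho>)"

definition fd :: "real \<Rightarrow> real \<Rightarrow> real" where
  "fd \<rho> p = 2 powr (-\<rho>) * (p powr (1/(1+\<rho>)) + (1-p) powr (1/(1+\<rho>))) powr \<rho>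
      * (p powr (1/(1+\<rho>) - 1) - (1-p) powr (1/(1+\<rho>) - 1))"

definition hdv :: "real \<Rightarrow> real" where "hdv p = ln ((1-p)/p) / ln 2"

definition Tr :: "real \<Rightarrow> real \<Rightarrow> real" where "Tr \<rho> p = fd \<rho> p / hdv p"

lemma fb_alg: fixes N a b p q s r K :: real
  assumes "N > 0" "p > 0" "q > 0" "s * (1 + r) = 1"
  shows "K * (N powr (1+r) * (a * s / p - b * s / q) * (1+r) / N) = K * N powr r * (a/p - b/q)"
proof -
  have 1: "N powr (1+r) = N powr r * N" using assms(1) by (simp add: powr_add)
  have 2: "(a * s / p - b * s / q) * (1+r) = (a/p - b/q) * (s*(1+r))" using assms(2,3) by (simp add: field_simps)
  have "K * (N powr (1+r) * (a * s / p - b * s / q) * (1+r) / N) = K * (N powr r * N * ((a * s / p - b * s / q) * (1+r)) / N)"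
    unfolding 1 by (simp add: algebra_simps)
  also have "\<dots> = K * N powr r * (a/p - b/q)" unfolding 2 assms(4) using assms(1) by simp
  finally show ?thesis .
qed

lemma fb_deriv: assumes r: "\<rho> > -1" and p: "0 < p" "p < 1"
  shows "(fb \<rho> has_real_derivative fd \<rho> p) (at p)"
proof -
  let ?s = "1/(1+\<rho>)"
  have N: "0 < p powr ?s + (1-p) powr ?s" by (intro add_pos_pos) (use p in auto)
  have e1: "p powr (?s - 1) = p powr ?s / p" using p by (simp add: powr_diff)
  have e2: "(1-p) powr (?s - 1) = (1-p) powr ?s / (1-p)" using p by (simp add: powr_diff)
  show ?thesis unfolding fb_def[abs_def] fd_def e1 e2
    apply (auto intro!: derivative_eq_intros)
    using p N r by (simp_all add: e1 e2 right_diff_distrib)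
qed


lemma h_eq: "bin_entropy p = - (p * ln p + (1-p) * ln (1-p)) / ln 2"
  unfolding bin_entropy_def log_def by (auto simp: field_simps)

lemma h_deriv: assumes p: "0 < p" "p < 1" shows "(bin_entropy has_real_derivative hdv p) (at p)"
proof -
  have e: "bin_entropy = (\<lambda>p. - (p * ln p + (1-p) * ln (1-p)) / ln 2)" using h_eq by blast
  show ?thesis unfolding e hdv_def
    apply (auto intro!: derivative_eq_intros)
    using p by (simp_all add: ln_div field_simps)
qed

lemma hd_pos: assumes "0 < p" "p < 1/2" shows "hdv p > 0"
  using assms unfolding hdv_def by (simp add: field_simps)

lemma cont_xlnx: "continuous_on {0..1} (\<lambda>x::real. x * ln x)"
  unfolding continuous_on_eq_continuous_within
proof
  fix x :: real assume x: "x \<in> {0..1}"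
  show "continuous (at x within {0..1}) (\<lambda>x. x * ln x)"
  proof (cases "x = 0")
    case True
    have "((\<lambda>x::real. x * ln x) \<longlongrightarrow> 0) (at_right 0)" by real_asymp
    thus ?thesis using True by (simp add: continuous_within at_within_Icc_at_right)
  next
    case False
    hence "x > 0" using x by simp
    hence "isCont (\<lambda>x. x * ln x) x" by (auto intro!: continuous_intros)
    thus ?thesis by (rule continuous_at_imp_continuous_within)
  qed
qed

lemma h_cont: "continuous_on {0..1} bin_entropy"
proof -
  have e: "bin_entropy = (\<lambda>p. - (p * ln p + (1-p) * ln (1-p)) / ln 2)" using h_eq by blast
  have c2: "continuous_on {0..1} (\<lambda>p::real. (1-p) * ln (1-p))"
    by (rule continuous_on_compose2[OF cont_xlnx, where f="\<lambda>p. 1-p"]) (auto intro!: continuous_intros)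
  show ?thesis unfolding e
    by (intro continuous_intros cont_xlnx c2) auto
qed

lemma N_pos: fixes p s :: real assumes "0 \<le> p" "p \<le> 1" "s > 0" shows "0 < p powr s + (1-p) powr s"
proof (cases "p = 0")
  case True thus ?thesis using True by simp
next
  case False
  hence "0 < p powr s" using assms by simp
  moreover have "0 \<le> (1-p) powr s" by simp
  ultimately show ?thesis by linarith
qed

lemma fb_cont: assumes r: "\<rho> > -1" shows "continuous_on {0..1} (fb \<rho>)"
proof -
  have s: "1/(1+\<rho>) > 0" using r by simp
  have c: "continuous_on {0..1} (\<lambda>p::real. p powr (1/(1+\<rho>)) + (1-p) powr (1/(1+\<rho>)))"
    by (intro continuous_on_add continuous_on_powr' continuous_on_id continuous_on_const continuous_on_diff) (use s in auto)
  show ?thesis unfolding fb_def[abs_def]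
    by (intro continuous_on_mult continuous_on_const continuous_on_powr[OF c continuous_on_const])
       (use N_pos[OF _ _ s] in \<open>fastforce\<close>)
qed

lemma mvt': fixes f f' :: "real \<Rightarrow> real"
  assumes "a < b" "continuous_on {a..b} f" "\<And>x. a < x \<Longrightarrow> x < b \<Longrightarrow> (f has_real_derivative f' x) (at x)"
  shows "\<exists>z. a < z \<and> z < b \<and> f b - f a = (b - a) * f' z"
proof -
  obtain l z where z: "a < z" "z < b" "DERIV f z :> l" "f b - f a = (b - a) * l"
    using MVT[OF assms(1,2)] assms(3) real_differentiable_def by blast
  have "l = f' z" using DERIV_unique[OF z(3) assms(3)[OF z(1,2)]] .
  thus ?thesis using z by blast
qed


lemma Tr_alg1: "(a::real) * e1 * (d * e2) / y = a * d * (e1 * e2) / y" by simp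
lemma Tr_alg2: "(K::real) * A * (a - b) / (y / l) = -(K * l) * (A * (b - a) / y)"
  by (cases "y = 0"; cases "l = 0") (simp_all add: field_simps)

lemma Tr_eq: assumes r: "\<rho> > -1" and p: "0 < p" "p < 1"
  shows "Tr \<rho> p = -(2 powr (-\<rho>) * ln 2) * Qy (1/(1+\<rho>)) \<rho> (ln ((1-p)/p))"
proof -
  define s where "s = 1/(1+\<rho>)"
  define L where "L = ln p"
  define M where "M = ln (1-p)"
  define N where "N = p powr s + (1-p) powr s"
  have sr: "s * \<rho> + s - 1 = 0" unfolding s_def using r by (simp add: field_simps)
  have y: "ln ((1-p)/p) = M - L" unfolding L_def M_def using p by (simp add: ln_div)
  have pp: "p powr a = exp (a * L)" for a unfolding L_def using p by (simp add: powr_def)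
  have qp: "(1-p) powr a = exp (a * M)" for a unfolding M_def using p by (simp add: powr_def)
  have A: "1 + exp (s * (M - L)) = N * exp (-s*L)"
    unfolding N_def pp qp by (simp add: ring_distribs exp_add[symmetric] exp_diff)
  have N0: "N > 0" unfolding N_def pp qp by (simp add: add_pos_pos)
  have A2: "(1 + exp (s * (M - L))) powr \<rho> = N powr \<rho> * exp (- s * L * \<rho>)"
    unfolding A using N0 by (simp add: powr_mult exp_powr_real)
  have b1: "exp ((s-1)*(M-L)) = exp((s-1)*M) * exp(-(s-1)*L)"
    unfolding exp_add[symmetric] by (simp add: algebra_simps)
  have b2: "exp((s-1)*L) * exp(-(s-1)*L) = 1" unfolding exp_add[symmetric] by (simp add: algebra_simps)
  have B: "exp ((s-1) * (M - L)) - 1 = ((1-p) powr (s-1) - p powr (s-1)) * exp (-(s-1)*L)"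
    unfolding pp qp b1 left_diff_distrib[of "exp ((s-1)*M)" "exp ((s-1)*L)" "exp (-(s-1)*L)"] b2 ..
  have C: "exp (- s * L * \<rho>) * exp (-(s-1)*L) = 1"
  proof -
    have "- s * L * \<rho> + -(s-1)*L = - L * (s * \<rho> + s - 1)" by (simp add: algebra_simps)
    thus ?thesis unfolding exp_add[symmetric] sr by simp
  qed
  have Q: "Qy s \<rho> (M - L) = N powr \<rho> * ((1-p) powr (s-1) - p powr (s-1)) / (M - L)"
    apply (unfold Qy_def)
    apply (unfold A2 B)
    apply (subst Tr_alg1)
    apply (subst C)
    by simp
  show ?thesis unfolding Tr_def fd_def hdv_def s_def[symmetric] N_def[symmetric] y Q
    by (rule Tr_alg2)
qed

lemma Tr_antimono: assumes r: "\<rho> > -1" and p: "0 < p1" "p1 \<le> p2" "p2 < 1/2"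
  shows "Tr \<rho> p2 \<le> Tr \<rho> p1"
proof -
  define s where "s = 1/(1+\<rho>)"
  have s0: "s > 0" unfolding s_def using r by simp
  have rs: "\<rho> * s = 1 - s" unfolding s_def using r by (simp add: field_simps)
  have y2: "0 < ln ((1-p2)/p2)" using p by (simp add: field_simps)
  have y12: "ln ((1-p2)/p2) \<le> ln ((1-p1)/p1)" using p by (simp add: field_simps)
  have q: "Qy s \<rho> (ln ((1-p1)/p1)) \<le> Qy s \<rho> (ln ((1-p2)/p2))"
    by (rule Qy_antimono[OF s0 rs y2 y12])
  have c: "0 < 2 powr (-\<rho>) * ln 2" by simp
  have "-(2 powr (-\<rho>) * ln 2) * Qy s \<rho> (ln ((1-p2)/p2)) \<le> -(2 powr (-\<rho>) * ln 2) * Qy s \<rho> (ln ((1-p1)/p1))"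
    using mult_left_mono[OF q less_imp_le[OF c]] by simp
  moreover have "p1 < 1" "p2 < 1" "0 < p2" using p by auto
  ultimately show ?thesis unfolding Tr_eq[OF r \<open>0 < p1\<close> \<open>p1 < 1\<close>] Tr_eq[OF r \<open>0 < p2\<close> \<open>p2 < 1\<close>] s_def[symmetric]
    by (simp add: mult_le_cancel_left)
qed


lemma fb_0: "fb \<rho> 0 = 2 powr (-\<rho>)" unfolding fb_def by simp

lemma fb_half: assumes r: "\<rho> > -1" shows "fb \<rho> (1/2) = 1"
proof -
  define s where "s = 1/(1+\<rho>)"
  have h: "(1/2::real) powr s = 2 powr (-s)" by (simp add: powr_divide powr_minus_divide)
  have h2: "(1/2::real) powr s + (1 - 1/2) powr s = 2 * (1/2) powr s" by simp
  have h3: "(2::real) powr (1 + -s) = 2 powr 1 * 2 powr (-s)" by (rule powr_add)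
  have "(1/2::real) powr s + (1 - 1/2) powr s = 2 powr (1 - s)"
    unfolding h2 using h3 h by simp
  moreover have "(2 powr (1 - s)) powr (1+\<rho>) = (2::real) powr \<rho>"
  proof -
    have "(1 - s)*(1+\<rho>) = \<rho>" unfolding s_def using r by (simp add: field_simps)
    thus ?thesis unfolding powr_powr by simp
  qed
  ultimately show ?thesis unfolding fb_def s_def[symmetric] by (simp add: powr_minus_divide)
qed

lemma h_0: "bin_entropy 0 = 0" unfolding bin_entropy_def by simp
lemma h_1: "bin_entropy 1 = 0" unfolding bin_entropy_def by simp
lemma h_half: "bin_entropy (1/2) = 1"
  unfolding h_eq by (simp add: ln_div)
lemma h_sym: "bin_entropy (1 - p) = bin_entropy p"
  unfolding h_eq by (simp add: algebra_simps)
lemma fb_sym: "fb \<rho> (1 - p) = fb \<rho> p"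
  unfolding fb_def by (simp add: algebra_simps)

lemma fd_eq: assumes "0 < z" "z < 1/2" shows "fd \<rho> z = hdv z * Tr \<rho> z"
  using hd_pos[OF assms] unfolding Tr_def by simp

lemma comb_deriv: assumes "\<rho> > -1" "0 < x" "x < 1"
  shows "((\<lambda>p. fb \<rho> p - c - \<mu> * bin_entropy p) has_real_derivative (fd \<rho> x - \<mu> * hdv x)) (at x)"
  using DERIV_diff[OF DERIV_diff[OF fb_deriv[OF assms] DERIV_const[of c]] DERIV_cmult[OF h_deriv[OF assms(2,3)], of \<mu>]]
  by simp

lemma comb_cont: assumes "\<rho> > -1" "0 \<le> a" "b \<le> 1"
  shows "continuous_on {a..b} (\<lambda>p. fb \<rho> p - c - \<mu> * bin_entropy p)"
proof -
  have sub: "{a..b} \<subseteq> {0..1}" using assms by auto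
  show ?thesis
    by (intro continuous_intros continuous_on_subset[OF fb_cont[OF assms(1)] sub]
          continuous_on_subset[OF h_cont sub])
qed

lemma chord: assumes r: "\<rho> > -1" and p: "0 \<le> p" "p \<le> 1/2"
  shows "2 powr (-\<rho>) + (1 - 2 powr (-\<rho>)) * bin_entropy p \<le> fb \<rho> p"
proof (rule ccontr)
  define \<mu> where "\<mu> = 1 - 2 powr (-\<rho>)"
  define \<Psi> where "\<Psi> = (\<lambda>p. fb \<rho> p - 2 powr (-\<rho>) - \<mu> * bin_entropy p)"
  assume "\<not> ?thesis"
  hence neg: "\<Psi> p < 0" unfolding \<Psi>_def \<mu>_def by simp
  have P0: "\<Psi> 0 = 0" unfolding \<Psi>_def by (simp add: fb_0 h_0)
  have Ph: "\<Psi> (1/2) = 0" unfolding \<Psi>_def \<mu>_def by (simp add: fb_half[OF r] h_half)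
  have p0: "0 < p" using neg P0 p by (cases "p = 0") auto
  have p1: "p < 1/2" using neg Ph p by (cases "p = 1/2") auto
  have D: "\<And>x. 0 < x \<Longrightarrow> x < 1/2 \<Longrightarrow> (\<Psi> has_real_derivative (hdv x * (Tr \<rho> x - \<mu>))) (at x)"
  proof -
    fix x :: real assume x: "0 < x" "x < 1/2"
    have "fd \<rho> x - \<mu> * hdv x = hdv x * (Tr \<rho> x - \<mu>)" using fd_eq[OF x] by (simp add: algebra_simps)
    thus "(\<Psi> has_real_derivative (hdv x * (Tr \<rho> x - \<mu>))) (at x)"
      unfolding \<Psi>_def using comb_deriv[OF r x(1), of "2 powr (-\<rho>)" \<mu>] x by simp
  qed
  obtain z1 where z1: "0 < z1" "z1 < p" "\<Psi> p - \<Psi> 0 = (p - 0) * (hdv z1 * (Tr \<rho> z1 - \<mu>))"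
    using mvt'[OF p0, of \<Psi> "\<lambda>x. hdv x * (Tr \<rho> x - \<mu>)"] comb_cont[OF r, of 0 p] D p1 p0
    unfolding \<Psi>_def by fastforce
  obtain z2 where z2: "p < z2" "z2 < 1/2" "\<Psi> (1/2) - \<Psi> p = (1/2 - p) * (hdv z2 * (Tr \<rho> z2 - \<mu>))"
    using mvt'[OF p1, of \<Psi> "\<lambda>x. hdv x * (Tr \<rho> x - \<mu>)"] comb_cont[OF r, of p "1/2"] D p1 p0
    unfolding \<Psi>_def by fastforce
  have h1: "hdv z1 > 0" using z1 p1 by (intro hd_pos) auto
  have h2: "hdv z2 > 0" using z2 p0 by (intro hd_pos) auto
  have "p * (hdv z1 * (Tr \<rho> z1 - \<mu>)) < 0" using z1(3) neg P0 by simp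
  hence "hdv z1 * (Tr \<rho> z1 - \<mu>) < 0" using p0 by (simp add: mult_less_0_iff)
  hence t1: "Tr \<rho> z1 < \<mu>" using h1 by (simp add: mult_less_0_iff)
  have "(1/2 - p) * (hdv z2 * (Tr \<rho> z2 - \<mu>)) > 0" using z2(3) neg Ph by simp
  hence "hdv z2 * (Tr \<rho> z2 - \<mu>) > 0" using p1 by (simp add: zero_less_mult_iff)
  hence t2: "Tr \<rho> z2 > \<mu>" using h2 by (simp add: zero_less_mult_iff)
  have "Tr \<rho> z2 \<le> Tr \<rho> z1" by (rule Tr_antimono[OF r z1(1)]) (use z1 z2 in auto)
  thus False using t1 t2 by simp
qed

lemma tangent: assumes r: "\<rho> > -1" and e: "0 < e" "e < 1/2" and p: "0 \<le> p" "p \<le> 1/2"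
  shows "fb \<rho> p \<le> fb \<rho> e + Tr \<rho> e * (bin_entropy p - bin_entropy e)"
proof -
  define lam where "lam = Tr \<rho> e"
  define \<Phi> where "\<Phi> = (\<lambda>p. fb \<rho> p - 0 - lam * bin_entropy p)"
  have D: "\<And>x. 0 < x \<Longrightarrow> x < 1/2 \<Longrightarrow> (\<Phi> has_real_derivative (hdv x * (Tr \<rho> x - lam))) (at x)"
  proof -
    fix x :: real assume x: "0 < x" "x < 1/2"
    have "fd \<rho> x - lam * hdv x = hdv x * (Tr \<rho> x - lam)" using fd_eq[OF x] by (simp add: algebra_simps)
    thus "(\<Phi> has_real_derivative (hdv x * (Tr \<rho> x - lam))) (at x)"
      unfolding \<Phi>_def using comb_deriv[OF r x(1), of 0 lam] x by simp
  qed
  have "\<Phi> p \<le> \<Phi> e"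
  proof (cases p e rule: linorder_cases)
    case less
    obtain z where z: "p < z" "z < e" "\<Phi> e - \<Phi> p = (e - p) * (hdv z * (Tr \<rho> z - lam))"
      using mvt'[OF less, of \<Phi> "\<lambda>x. hdv x * (Tr \<rho> x - lam)"] comb_cont[OF r, of p e] D p e
      unfolding \<Phi>_def by fastforce
    have "hdv z > 0" using z p e by (intro hd_pos) auto
    moreover have "Tr \<rho> e \<le> Tr \<rho> z" by (rule Tr_antimono[OF r]) (use z p e in auto)
    ultimately have "0 \<le> (e - p) * (hdv z * (Tr \<rho> z - lam))" using less unfolding lam_def by simp
    thus ?thesis using z(3) by simp
  next
    case equal thus ?thesis by simp
  next
    case greater
    obtain z where z: "e < z" "z < p" "\<Phi> p - \<Phi> e = (p - e) * (hdv z * (Tr \<rho> z - lam))"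
      using mvt'[OF greater, of \<Phi> "\<lambda>x. hdv x * (Tr \<rho> x - lam)"] comb_cont[OF r, of e p] D p e
      unfolding \<Phi>_def by fastforce
    have "hdv z > 0" using z p e by (intro hd_pos) auto
    moreover have "Tr \<rho> z \<le> Tr \<rho> e" by (rule Tr_antimono[OF r]) (use z p e in auto)
    ultimately have "(p - e) * (hdv z * (Tr \<rho> z - lam)) \<le> 0" using greater unfolding lam_def
      by (simp add: mult_nonneg_nonpos)
    thus ?thesis using z(3) by simp
  qed
  thus ?thesis unfolding \<Phi>_def lam_def by (simp add: algebra_simps)
qed


lemma h_strict: assumes "0 \<le> a" "a < b" "b \<le> 1/2" shows "bin_entropy a < bin_entropy b"
proof (rule DERIV_pos_imp_increasing_open[OF assms(2)])
  fix x assume x: "a < x" "x < b"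
  show "\<exists>y. (bin_entropy has_real_derivative y) (at x) \<and> 0 < y"
    using h_deriv[of x] hd_pos[of x] x assms by auto
next
  show "continuous_on {a..b} bin_entropy"
    by (rule continuous_on_subset[OF h_cont]) (use assms in auto)
qed

lemma h_mono: assumes "0 \<le> a" "a \<le> b" "b \<le> 1/2" shows "bin_entropy a \<le> bin_entropy b"
  using h_strict[of a b] assms by (cases "a = b") auto

lemma h_inj: assumes "0 \<le> a" "a \<le> 1/2" "0 \<le> b" "b \<le> 1/2" "bin_entropy a = bin_entropy b"
  shows "a = b"
  using h_strict[of a b] h_strict[of b a] assms by (cases a b rule: linorder_cases) auto

lemma h_range: assumes "0 \<le> p" "p \<le> 1" shows "0 \<le> bin_entropy p \<and> bin_entropy p \<le> 1"
proof (cases "p \<le> 1/2")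
  case True
  thus ?thesis using h_mono[of 0 p] h_mono[of p "1/2"] assms h_0 h_half by auto
next
  case False
  hence "0 \<le> 1 - p" "1 - p \<le> 1/2" using assms by auto
  thus ?thesis using h_mono[of 0 "1-p"] h_mono[of "1-p" "1/2"] h_0 h_half h_sym[of p] by auto
qed

lemma hinv: assumes "0 \<le> c" "c \<le> 1"
  shows "0 \<le> bin_entropy_inv c \<and> bin_entropy_inv c \<le> 1/2 \<and> bin_entropy (bin_entropy_inv c) = c"
proof -
  obtain e where e: "0 \<le> e" "e \<le> 1/2" "bin_entropy e = c"
    using IVT'[of bin_entropy 0 c "1/2"] assms h_0 h_half
      continuous_on_subset[OF h_cont, of "{0..1/2}"] by auto
  have "\<exists>!e. 0 \<le> e \<and> e \<le> 1/2 \<and> bin_entropy e = c"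
    using e h_inj by blast
  thus ?thesis unfolding bin_entropy_inv_def by (rule theI')
qed

lemma hinv_h: assumes "0 \<le> e" "e \<le> 1/2" shows "bin_entropy_inv (bin_entropy e) = e"
proof -
  have r: "0 \<le> bin_entropy e" "bin_entropy e \<le> 1" using h_range[of e] assms by auto
  show ?thesis using hinv[OF r] h_inj[of "bin_entropy_inv (bin_entropy e)" e] assms by auto
qed

lemma h_eq_fb: assumes "0 \<le> p" "p \<le> 1" "0 \<le> e" "e \<le> 1/2" "bin_entropy p = bin_entropy e"
  shows "fb \<rho> p = fb \<rho> e"
proof (cases "p \<le> 1/2")
  case True thus ?thesis using h_inj[of p e] assms by auto
next
  case False
  hence "1 - p = e" using h_inj[of "1-p" e] assms h_sym[of p] by auto
  thus ?thesis using fb_sym[of \<rho> p] by auto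
qed

lemma chord': assumes r: "\<rho> > -1" and p: "0 \<le> p" "p \<le> 1"
  shows "2 powr (-\<rho>) + (1 - 2 powr (-\<rho>)) * bin_entropy p \<le> fb \<rho> p"
proof (cases "p \<le> 1/2")
  case True thus ?thesis using chord[OF r] p by auto
next
  case False
  thus ?thesis using chord[OF r, of "1-p"] p h_sym[of p] fb_sym[of \<rho> p] by auto
qed

lemma tangent': assumes r: "\<rho> > -1" and e: "0 < e" "e < 1/2" and p: "0 \<le> p" "p \<le> 1"
  shows "fb \<rho> p \<le> fb \<rho> e + Tr \<rho> e * (bin_entropy p - bin_entropy e)"
proof (cases "p \<le> 1/2")
  case True thus ?thesis using tangent[OF r e] p by auto
next
  case False
  thus ?thesis using tangent[OF r e, of "1-p"] p h_sym[of p] fb_sym[of \<rho> p] by auto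
qed


lemma term_F: fixes a S s r :: real
  assumes a: "a \<ge> 0" and S: "S > 0" and sr: "s * (1 + r) = 1" and s: "s > 0"
  shows "(if a > 0 then a * ((1/2) * S / a powr s) powr r else 0) = 2 powr (-r) * S powr r * a powr s"
proof (cases "a > 0")
  case False thus ?thesis using a s by simp
next
  case True
  have 1: "((1/2) * S / a powr s) powr r = (1/2) powr r * S powr r / (a powr s) powr r"
    using S True by (simp add: powr_divide powr_mult)
  have 2: "(1/2::real) powr r = 2 powr (-r)" by (simp add: powr_divide powr_minus_divide)
  have 3: "a * (1 / (a powr s) powr r) = a powr s"
  proof -
    have "a * (1 / (a powr s) powr r) = a powr 1 / a powr (s * r)" using True by (simp add: powr_powr)
    also have "\<dots> = a powr (1 - s * r)" using True by (simp add: powr_diff)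
    also have "1 - s * r = s" using sr by (simp add: algebra_simps)
    finally show ?thesis .
  qed
  have "a * ((1/2) * S / a powr s) powr r = 2 powr (-r) * S powr r * (a * (1 / (a powr s) powr r))"
    unfolding 1 2 by simp
  thus ?thesis unfolding 3 using True by simp
qed

lemma pt_F: fixes a b r :: real
  assumes a: "a \<ge> 0" and b: "b \<ge> 0" and r: "r > -1"
  shows "(1/2) * (if a > 0 then a * ((1/2) * (a powr (1/(1+r)) + b powr (1/(1+r))) / a powr (1/(1+r))) powr r else 0)
       + (1/2) * (if b > 0 then b * ((1/2) * (a powr (1/(1+r)) + b powr (1/(1+r))) / b powr (1/(1+r))) powr r else 0)
       = ((a + b)/2) * fb r (a / (a + b))"
proof (cases "a + b = 0")
  case True
  hence "a = 0" "b = 0" using a b by auto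
  thus ?thesis by simp
next
  case False
  hence m: "a + b > 0" using a b by simp
  define s where "s = 1/(1+r)"
  have s: "s > 0" unfolding s_def using r by simp
  have sr: "s * (1 + r) = 1" unfolding s_def using r by simp
  define S where "S = a powr s + b powr s"
  have S: "S > 0" unfolding S_def using m a b s
    by (cases "a > 0") (auto intro: add_pos_nonneg add_nonneg_pos)
  have L: "(1/2) * (if a > 0 then a * ((1/2) * S / a powr s) powr r else 0)
       + (1/2) * (if b > 0 then b * ((1/2) * S / b powr s) powr r else 0)
       = (1/2) * 2 powr (-r) * S powr (1 + r)"
  proof -
    have e: "S powr (1 + r) = S powr r * S" using S by (simp add: powr_add)
    show ?thesis unfolding term_F[OF a S sr s] term_F[OF b S sr s] e
      by (simp add: S_def algebra_simps)
  qed
  have fbm: "fb r (a / (a + b)) = 2 powr (-r) * (S / (a+b) powr s) powr (1 + r)"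
  proof -
    have "1 - a / (a + b) = b / (a + b)" using m by (simp add: field_simps)
    moreover have "(a/(a+b)) powr s + (b/(a+b)) powr s = S / (a+b) powr s"
      unfolding S_def using a b m by (simp add: powr_divide add_divide_distrib)
    ultimately show ?thesis unfolding fb_def s_def[symmetric] by simp
  qed
  have "(S / (a+b) powr s) powr (1 + r) = S powr (1 + r) / (a + b)"
    using S m sr by (simp add: powr_divide powr_powr)
  hence R: "((a + b)/2) * fb r (a / (a + b)) = (1/2) * 2 powr (-r) * S powr (1 + r)"
    unfolding fbm using m by (simp add: field_simps)
  show ?thesis using L R unfolding S_def s_def by simp
qed

lemma term_C: fixes a m :: real assumes a: "a \<ge> 0" and m: "m > 0"
  shows "(if a > 0 then a * log 2 (a / ((1/2) * m)) else 0) = a + a * ln (a / m) / ln 2"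
proof (cases "a > 0")
  case False thus ?thesis using a by simp
next
  case True
  have e1: "a / ((1/2) * m) = 2 * (a / m)" by simp
  have e2: "ln (2 * (a/m)) = ln 2 + ln (a/m)" using ln_mult[of 2 "a/m"] True m by simp
  have "log 2 (a / ((1/2) * m)) = 1 + ln (a/m) / ln 2"
    unfolding e1 log_def e2 by (simp add: add_divide_distrib)
  thus ?thesis using True by (simp add: algebra_simps)
qed

lemma C_alg: fixes a b A B l :: real assumes "a + b > 0" "l > 0"
  shows "(1/2) * (a + a*A/l) + (1/2) * (b + b*B/l) = ((a+b)/2)*(1 - - (a/(a+b)*A + b/(a+b)*B)/l)"
proof -
  have 2: "((a+b)/2)*(1 - - X/l) = ((a+b)/2) + ((a+b) * X)/(2*l)" for X
    using assms(2) by (simp add: field_simps)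
  have 1: "(a+b) * (a/(a+b)*A + b/(a+b)*B) = a*A + b*B"
  proof -
    have "(a+b) * (a/(a+b)*A + b/(a+b)*B) = ((a+b)*(a/(a+b)))*A + ((a+b)*(b/(a+b)))*B"
      by (simp add: algebra_simps)
    also have "(a+b)*(a/(a+b)) = a" using assms(1) by simp
    also have "(a+b)*(b/(a+b)) = b" using assms(1) by simp
    finally show ?thesis .
  qed
  show ?thesis unfolding 2 1 using assms by (simp add: field_simps)
qed

lemma pt_C: fixes a b :: real assumes a: "a \<ge> 0" and b: "b \<ge> 0"
  shows "(1/2) * (if a > 0 then a * log 2 (a / ((1/2) * (a + b))) else 0)
       + (1/2) * (if b > 0 then b * log 2 (b / ((1/2) * (a + b))) else 0)
       = ((a + b)/2) * (1 - bin_entropy (a / (a + b)))"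
proof (cases "a + b = 0")
  case True
  hence "a = 0" "b = 0" using a b by auto
  thus ?thesis by simp
next
  case False
  hence m: "a + b > 0" using a b by simp
  have 1: "1 - a / (a + b) = b / (a + b)" using m by (simp add: field_simps)
  show ?thesis unfolding term_C[OF a m] term_C[OF b m] h_eq 1
    by (rule C_alg) (use m in auto)
qed


definition mm :: "(bool \<Rightarrow> 'y \<Rightarrow> real) \<Rightarrow> 'y \<Rightarrow> real" where "mm W y = W True y + W False y"
definition pp :: "(bool \<Rightarrow> 'y \<Rightarrow> real) \<Rightarrow> 'y \<Rightarrow> real" where "pp W y = W True y / mm W y"

lemma sumB: "(\<Sum>x\<in>(UNIV::bool set). f x) = f True + f False"
  by (simp add: UNIV_bool add.commute)

lemma F_decomp: assumes fin: "finite Y" and nn: "\<And>x y. y \<in> Y \<Longrightarrow> W x y \<ge> 0" and r: "\<rho> > -1"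
  shows "Ffun W Y \<rho> = (\<Sum>y\<in>Y. (mm W y / 2) * fb \<rho> (pp W y))"
proof -
  define g where "g = (\<lambda>x y. W x y * (((1/2) * (\<Sum>x'\<in>UNIV. W x' y powr (1/(1+\<rho>)))) / W x y powr (1/(1+\<rho>))) powr \<rho>)"
  have "Ffun W Y \<rho> = (\<Sum>x\<in>UNIV. (1/2) * (\<Sum>y\<in>{y\<in>Y. W x y > 0}. g x y))"
    unfolding Ffun_def g_def ..
  also have "\<dots> = (\<Sum>x\<in>UNIV. \<Sum>y\<in>Y. (1/2) * (if W x y > 0 then g x y else 0))"
    by (simp add: sum.inter_filter[OF fin] sum_distrib_left)
  also have "\<dots> = (\<Sum>y\<in>Y. \<Sum>x\<in>UNIV. (1/2) * (if W x y > 0 then g x y else 0))"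
    by (rule sum.swap)
  also have "\<dots> = (\<Sum>y\<in>Y. (mm W y / 2) * fb \<rho> (pp W y))"
  proof (rule sum.cong[OF refl])
    fix y assume y: "y \<in> Y"
    show "(\<Sum>x\<in>UNIV. (1/2) * (if W x y > 0 then g x y else 0)) = (mm W y / 2) * fb \<rho> (pp W y)"
      unfolding g_def mm_def pp_def sumB by (rule pt_F[OF nn[OF y] nn[OF y] r])
  qed
  finally show ?thesis .
qed

lemma C_decomp: assumes fin: "finite Y" and nn: "\<And>x y. y \<in> Y \<Longrightarrow> W x y \<ge> 0"
  shows "capacity W Y = (\<Sum>y\<in>Y. (mm W y / 2) * (1 - bin_entropy (pp W y)))"
proof -
  define g where "g = (\<lambda>x y. W x y * log 2 (W x y / out_prob W y))"
  have "capacity W Y = (\<Sum>x\<in>UNIV. (1/2) * (\<Sum>y\<in>{y\<in>Y. W x y > 0}. g x y))"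
    unfolding capacity_def g_def ..
  also have "\<dots> = (\<Sum>x\<in>UNIV. \<Sum>y\<in>Y. (1/2) * (if W x y > 0 then g x y else 0))"
    by (simp add: sum.inter_filter[OF fin] sum_distrib_left)
  also have "\<dots> = (\<Sum>y\<in>Y. \<Sum>x\<in>UNIV. (1/2) * (if W x y > 0 then g x y else 0))"
    by (rule sum.swap)
  also have "\<dots> = (\<Sum>y\<in>Y. (mm W y / 2) * (1 - bin_entropy (pp W y)))"
  proof (rule sum.cong[OF refl])
    fix y assume y: "y \<in> Y"
    show "(\<Sum>x\<in>UNIV. (1/2) * (if W x y > 0 then g x y else 0)) = (mm W y / 2) * (1 - bin_entropy (pp W y))"
      unfolding g_def mm_def pp_def out_prob_def sumB by (rule pt_C[OF nn[OF y] nn[OF y]])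
  qed
  finally show ?thesis .
qed


lemma pp_range: assumes "W True y \<ge> 0" "W False y \<ge> 0" shows "0 \<le> pp W y \<and> pp W y \<le> 1"
  using assms unfolding pp_def mm_def by (auto simp: divide_le_eq_1)

lemma main_bounds:
  assumes b: "bims W Y" and r: "\<rho> > -1"
  shows "0 \<le> capacity W Y \<and> capacity W Y \<le> 1 \<and> 0 < F_bec \<rho> (capacity W Y) \<and>
         F_bec \<rho> (capacity W Y) \<le> Ffun W Y \<rho> \<and> Ffun W Y \<rho> \<le> F_bsc \<rho> (capacity W Y)"
proof -
  have fin: "finite Y" and nn: "\<And>x y. y \<in> Y \<Longrightarrow> W x y \<ge> 0" and s1: "\<And>x. (\<Sum>y\<in>Y. W x y) = 1"
    using b unfolding bims_def by auto
  define w where "w = (\<lambda>y. mm W y / 2)"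
  define q where "q = pp W"
  have w0: "\<And>y. y \<in> Y \<Longrightarrow> w y \<ge> 0" unfolding w_def mm_def using nn by (simp add: add_nonneg_nonneg)
  have q01: "0 \<le> q y \<and> q y \<le> 1" if y: "y \<in> Y" for y
    unfolding q_def by (rule pp_range) (use nn[OF y] in auto)
  have sw: "(\<Sum>y\<in>Y. w y) = 1" unfolding w_def mm_def
    using s1[of True] s1[of False] by (simp add: sum.distrib sum_divide_distrib[symmetric])
  define H where "H = (\<Sum>y\<in>Y. w y * bin_entropy (q y))"
  have hr: "0 \<le> bin_entropy (q y) \<and> bin_entropy (q y) \<le> 1" if y: "y \<in> Y" for y
    using h_range[of "q y"] q01[OF y] by auto
  have H0: "0 \<le> H" unfolding H_def using w0 hr by (intro sum_nonneg mult_nonneg_nonneg) auto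
  have H1: "H \<le> 1"
  proof -
    have "H \<le> (\<Sum>y\<in>Y. w y * 1)" unfolding H_def using w0 hr by (intro sum_mono mult_left_mono) auto
    thus ?thesis using sw by simp
  qed
  have F: "Ffun W Y \<rho> = (\<Sum>y\<in>Y. w y * fb \<rho> (q y))" unfolding w_def q_def using F_decomp[OF fin nn r] .
  have C: "capacity W Y = 1 - H"
  proof -
    have "capacity W Y = (\<Sum>y\<in>Y. w y * (1 - bin_entropy (q y)))" unfolding w_def q_def using C_decomp[OF fin nn] .
    also have "\<dots> = (\<Sum>y\<in>Y. w y) - H" unfolding H_def by (simp add: right_diff_distrib sum_subtractf)
    finally show ?thesis using sw by simp
  qed
  define \<epsilon> where "\<epsilon> = bin_entropy_inv H"
  have eps: "0 \<le> \<epsilon>" "\<epsilon> \<le> 1/2" "bin_entropy \<epsilon> = H" using hinv[OF H0 H1] unfolding \<epsilon>_def by auto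
  have bsc: "F_bsc \<rho> (capacity W Y) = fb \<rho> \<epsilon>" unfolding F_bsc_def Let_def fb_def C \<epsilon>_def by simp
  have bec: "F_bec \<rho> (capacity W Y) = H + (1 - H) * 2 powr (-\<rho>)" unfolding F_bec_def C
    by (simp add: algebra_simps)
  have becpos: "0 < H + (1 - H) * 2 powr (-\<rho>)"
  proof (cases "H = 1")
    case True thus ?thesis by simp
  next
    case False hence "0 < (1 - H) * 2 powr (-\<rho>)" using H1 by simp
    thus ?thesis using H0 by linarith
  qed
  have lower: "H + (1 - H) * 2 powr (-\<rho>) \<le> Ffun W Y \<rho>"
  proof -
    have "(\<Sum>y\<in>Y. w y * (2 powr (-\<rho>) + (1 - 2 powr (-\<rho>)) * bin_entropy (q y))) \<le> (\<Sum>y\<in>Y. w y * fb \<rho> (q y))"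
      using w0 q01 chord'[OF r] by (intro sum_mono mult_left_mono) auto
    moreover have "(\<Sum>y\<in>Y. w y * (2 powr (-\<rho>) + (1 - 2 powr (-\<rho>)) * bin_entropy (q y)))
        = 2 powr (-\<rho>) * (\<Sum>y\<in>Y. w y) + (1 - 2 powr (-\<rho>)) * H"
    proof -
      define c d where "c = 2 powr (-\<rho>)" "d = 1 - 2 powr (-\<rho>)"
      have "(\<Sum>y\<in>Y. w y * (c + d * bin_entropy (q y))) = (\<Sum>y\<in>Y. c * w y + d * (w y * bin_entropy (q y)))"
        by (rule sum.cong) (simp_all add: algebra_simps)
      also have "\<dots> = c * (\<Sum>y\<in>Y. w y) + d * H" unfolding H_def by (simp add: sum.distrib sum_distrib_left)
      finally show ?thesis unfolding c_d_def .
    qed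
    ultimately show ?thesis unfolding F using sw by (simp add: algebra_simps)
  qed
  have upper: "Ffun W Y \<rho> \<le> fb \<rho> \<epsilon>"
  proof (cases "0 < \<epsilon> \<and> \<epsilon> < 1/2")
    case True
    have "(\<Sum>y\<in>Y. w y * fb \<rho> (q y)) \<le> (\<Sum>y\<in>Y. w y * (fb \<rho> \<epsilon> + Tr \<rho> \<epsilon> * (bin_entropy (q y) - bin_entropy \<epsilon>)))"
      using w0 q01 tangent'[OF r] True by (intro sum_mono mult_left_mono) auto
    also have "\<dots> = fb \<rho> \<epsilon> * (\<Sum>y\<in>Y. w y) + Tr \<rho> \<epsilon> * (H - bin_entropy \<epsilon> * (\<Sum>y\<in>Y. w y))"
    proof -
      define c T e where "c = fb \<rho> \<epsilon>" "T = Tr \<rho> \<epsilon>" "e = bin_entropy \<epsilon>"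
      have "(\<Sum>y\<in>Y. w y * (c + T * (bin_entropy (q y) - e))) = (\<Sum>y\<in>Y. c * w y + (T * (w y * bin_entropy (q y)) - T * e * w y))"
        by (rule sum.cong) (simp_all add: algebra_simps)
      also have "\<dots> = c * (\<Sum>y\<in>Y. w y) + (T * H - T * e * (\<Sum>y\<in>Y. w y))"
        unfolding H_def by (simp add: sum.distrib sum_subtractf sum_distrib_left)
      finally show ?thesis unfolding c_T_e_def by (simp add: algebra_simps)
    qed
    also have "\<dots> = fb \<rho> \<epsilon>" using sw eps by simp
    finally show ?thesis unfolding F .
  next
    case False
    hence e01: "\<epsilon> = 0 \<or> \<epsilon> = 1/2" using eps by auto
    have all: "\<forall>y\<in>Y. w y = 0 \<or> bin_entropy (q y) = bin_entropy \<epsilon>"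
    proof (cases "\<epsilon> = 0")
      case True
      hence H00: "H = 0" using eps h_0 by simp
      have "\<forall>y\<in>Y. w y * bin_entropy (q y) = 0"
        using sum_nonneg_eq_0_iff[OF fin, of "\<lambda>y. w y * bin_entropy (q y)"] H00 w0 hr
        unfolding H_def by auto
      thus ?thesis using True h_0 by auto
    next
      case False
      hence "\<epsilon> = 1/2" using e01 by simp
      hence H11: "H = 1" using eps(3) h_half by metis
      have "(\<Sum>y\<in>Y. w y * (1 - bin_entropy (q y))) = 0"
        using sw H11 unfolding H_def by (simp add: right_diff_distrib sum_subtractf)
      hence "\<forall>y\<in>Y. w y * (1 - bin_entropy (q y)) = 0"
        using sum_nonneg_eq_0_iff[OF fin, of "\<lambda>y. w y * (1 - bin_entropy (q y))"] w0 hr by auto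
      moreover have "bin_entropy \<epsilon> = 1" using eps(3) H11 by simp
      ultimately show ?thesis by auto
    qed
    have "(\<Sum>y\<in>Y. w y * fb \<rho> (q y)) = (\<Sum>y\<in>Y. w y * fb \<rho> \<epsilon>)"
    proof (rule sum.cong[OF refl])
      fix y assume y: "y \<in> Y"
      show "w y * fb \<rho> (q y) = w y * fb \<rho> \<epsilon>"
        using all y h_eq_fb[of "q y" \<epsilon> \<rho>] q01[OF y] eps by auto
    qed
    also have "\<dots> = fb \<rho> \<epsilon>" using sw by (simp add: sum_distrib_right[symmetric])
    finally show ?thesis unfolding F by simp
  qed
  show ?thesis using H0 H1 C bsc bec becpos lower upper by simp
qed


lemma fb1: assumes "0 \<le> e" "e \<le> 1" shows "fb 1 e = (1/2) * (sqrt e + sqrt (1 - e))^2"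
proof -
  have "fb 1 e = 2 powr (-1) * (e powr (1/2) + (1-e) powr (1/2)) powr 2"
    unfolding fb_def by simp
  also have "\<dots> = (1/2) * (sqrt e + sqrt (1 - e))^2"
    using assms by (simp add: powr_half_sqrt powr_minus_divide)
  finally show ?thesis .
qed

lemma E0_bounds: assumes "bims W Y" "\<rho> > -1"
  shows "- log 2 (F_bsc \<rho> (capacity W Y)) \<le> E0 W Y \<rho> \<and> E0 W Y \<rho> \<le> - log 2 (F_bec \<rho> (capacity W Y))"
proof -
  note m = main_bounds[OF assms]
  have F0: "0 < Ffun W Y \<rho>" using m by linarith
  have B0: "0 < F_bsc \<rho> (capacity W Y)" using m by linarith
  show ?thesis unfolding E0_def using m F0 B0 by simp
qed

lemma sumO: "(\<Sum>y\<in>(UNIV::bool option set). f y) = f None + f (Some True) + f (Some False)"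
proof -
  have "(UNIV::bool option set) = insert None (Some ` UNIV)" by (rule UNIV_option_conv)
  moreover have "(\<Sum>y\<in>insert None (Some ` UNIV). f y) = f None + (\<Sum>y\<in>Some ` (UNIV::bool set). f y)"
    by (rule sum.insert) auto
  moreover have "(\<Sum>y\<in>Some ` (UNIV::bool set). f y) = (\<Sum>b\<in>UNIV. f (Some b))"
    by (rule sum.reindex_cong[of Some]) auto
  ultimately show ?thesis by (simp add: sumB add.assoc)
qed

lemma bsc_part: assumes p: "0 \<le> p" "p \<le> 1"
  shows "(let C = capacity (bsc p) UNIV; \<epsilon> = bin_entropy_inv (1 - C) in
              E0 (bsc p) UNIV 1 = - log 2 ((1/2) * (sqrt \<epsilon> + sqrt (1 - \<epsilon>))^2))"
proof -
  have nn: "\<And>x y. y \<in> UNIV \<Longrightarrow> bsc p x y \<ge> 0" unfolding bsc_def using p by auto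
  have r: "(1::real) > -1" by simp
  have mm: "mm (bsc p) y = 1" for y unfolding mm_def bsc_def by auto
  have ppT: "pp (bsc p) True = 1 - p" and ppF: "pp (bsc p) False = p"
    unfolding pp_def mm unfolding bsc_def by auto
  have F: "Ffun (bsc p) UNIV 1 = fb 1 p"
  proof -
    have "Ffun (bsc p) UNIV 1 = (\<Sum>y\<in>UNIV. mm (bsc p) y / 2 * fb 1 (pp (bsc p) y))"
      by (rule F_decomp[OF finite_class.finite_UNIV nn r])
    also have "\<dots> = fb 1 p" unfolding sumB mm ppT ppF fb_sym by simp
    finally show ?thesis .
  qed
  have C: "capacity (bsc p) UNIV = 1 - bin_entropy p"
  proof -
    have "capacity (bsc p) UNIV = (\<Sum>y\<in>UNIV. mm (bsc p) y / 2 * (1 - bin_entropy (pp (bsc p) y)))"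
      by (rule C_decomp[OF finite_class.finite_UNIV nn])
    also have "\<dots> = 1 - bin_entropy p" unfolding sumB mm ppT ppF h_sym by (simp add: algebra_simps)
    finally show ?thesis .
  qed
  define e0 where "e0 = min p (1 - p)"
  have e0: "0 \<le> e0" "e0 \<le> 1/2" unfolding e0_def using p by (auto simp: min_def)
  have he: "bin_entropy e0 = bin_entropy p" unfolding e0_def using h_sym[of p] by (simp add: min_def)
  have fe: "fb 1 e0 = fb 1 p" unfolding e0_def using fb_sym[of 1 p] by (simp add: min_def)
  have eps: "bin_entropy_inv (1 - capacity (bsc p) UNIV) = e0" unfolding C using hinv_h[OF e0] he by simp
  have f1: "fb 1 e0 = (1/2) * (sqrt e0 + sqrt (1 - e0))^2" by (rule fb1) (use e0 in auto)
  show ?thesis unfolding Let_def eps E0_def F fe[symmetric] f1 ..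
qed

lemma bec_part: assumes e: "0 \<le> e" "e \<le> 1"
  shows "(let C = capacity (bec e) UNIV in E0 (bec e) UNIV 1 = - log 2 ((1 + (1 - C)) / 2))"
proof -
  have nn: "\<And>x y. y \<in> UNIV \<Longrightarrow> bec e x y \<ge> 0" unfolding bec_def using e by (auto split: option.split)
  have r: "(1::real) > -1" by simp
  have mN: "mm (bec e) None = 2 * e" and mT: "mm (bec e) (Some True) = 1 - e" and mF: "mm (bec e) (Some False) = 1 - e"
    unfolding mm_def bec_def by auto
  have pN: "pp (bec e) None = e / (2 * e)" and pT: "pp (bec e) (Some True) = (1 - e) / (1 - e)"
    and pF: "pp (bec e) (Some False) = 0"
    unfolding pp_def mN mT mF unfolding bec_def by auto
  have fN: "e * fb 1 (e / (2 * e)) = e" by (cases "e = 0") (simp_all add: fb_half)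
  have hN: "e * bin_entropy (e / (2 * e)) = e" by (cases "e = 0") (simp_all add: h_half)
  have fb11: "fb 1 1 = 1/2" using fb_sym[of 1 0] fb_0[of 1] by (simp add: powr_minus_divide)
  have f1: "fb 1 ((1 - e) / (1 - e)) = 1/2"
    by (cases "e = 1") (simp_all add: fb_0 powr_minus_divide fb11)
  have h1: "bin_entropy ((1 - e) / (1 - e)) = 0" by (cases "e = 1") (simp_all add: h_0 h_1)
  have F: "Ffun (bec e) UNIV 1 = (1 + e) / 2"
  proof -
    have "Ffun (bec e) UNIV 1 = (\<Sum>y\<in>UNIV. mm (bec e) y / 2 * fb 1 (pp (bec e) y))"
      by (rule F_decomp[OF finite_class.finite_UNIV nn r])
    also have "\<dots> = (1 + e) / 2" unfolding sumO mN mT mF pN pT pF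
      using fN f1 by (simp add: fb_0 powr_minus_divide fb11 fb_half[OF r] field_simps)
    finally show ?thesis .
  qed
  have C: "capacity (bec e) UNIV = 1 - e"
  proof -
    have "capacity (bec e) UNIV = (\<Sum>y\<in>UNIV. mm (bec e) y / 2 * (1 - bin_entropy (pp (bec e) y)))"
      by (rule C_decomp[OF finite_class.finite_UNIV nn])
    also have "\<dots> = 1 - e" unfolding sumO mN mT mF pN pT pF
      using hN h1 by (simp add: h_0 field_simps)
    finally show ?thesis .
  qed
  show ?thesis unfolding Let_def E0_def F C by simp
qed

theorem mainTheorem6:
  fixes W :: "bool \<Rightarrow> 'y \<Rightarrow> real" and Y :: "'y set"
  assumes "bims W Y"
  shows "(\<forall>\<rho>::real. \<rho> > -1 \<longrightarrow>
            - log 2 (F_bsc \<rho> (capacity W Y)) \<le> E0 W Y \<rho> \<and>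
            E0 W Y \<rho> \<le> - log 2 (F_bec \<rho> (capacity W Y)))
       \<and> (let C = capacity W Y; \<epsilon> = bin_entropy_inv (1 - C) in
            - log 2 ((1/2) * (sqrt \<epsilon> + sqrt (1 - \<epsilon>))^2) \<le> E0 W Y 1 \<and>
            E0 W Y 1 \<le> - log 2 ((1 + (1 - C)) / 2))
       \<and> (\<forall>p::real. 0 \<le> p \<and> p \<le> 1 \<longrightarrow>
            (let C = capacity (bsc p) UNIV; \<epsilon> = bin_entropy_inv (1 - C) in
              E0 (bsc p) UNIV 1 = - log 2 ((1/2) * (sqrt \<epsilon> + sqrt (1 - \<epsilon>))^2)))
       \<and> (\<forall>e::real. 0 \<le> e \<and> e \<le> 1 \<longrightarrow>
            (let C = capacity (bec e) UNIV in
              E0 (bec e) UNIV 1 = - log 2 ((1 + (1 - C)) / 2)))"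
proof (intro conjI allI impI)
  fix \<rho> :: real assume r: "\<rho> > -1"
  show "- log 2 (F_bsc \<rho> (capacity W Y)) \<le> E0 W Y \<rho>" using E0_bounds[OF assms r] by simp
  show "E0 W Y \<rho> \<le> - log 2 (F_bec \<rho> (capacity W Y))" using E0_bounds[OF assms r] by simp
next
  have r: "(1::real) > -1" by simp
  note m = main_bounds[OF assms r]
  define C where "C = capacity W Y"
  define \<epsilon> where "\<epsilon> = bin_entropy_inv (1 - C)"
  have eps: "0 \<le> \<epsilon>" "\<epsilon> \<le> 1/2" using hinv[of "1 - C"] m unfolding \<epsilon>_def C_def by auto
  have bsc: "F_bsc 1 C = (1/2) * (sqrt \<epsilon> + sqrt (1 - \<epsilon>))^2"
    unfolding F_bsc_def Let_def \<epsilon>_def[symmetric] using fb1[of \<epsilon>] eps unfolding fb_def by simp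
  have bec: "F_bec 1 C = (1 + (1 - C)) / 2" unfolding F_bec_def by (simp add: powr_minus_divide field_simps)
  show "let C = capacity W Y; \<epsilon> = bin_entropy_inv (1 - C) in
            - log 2 ((1/2) * (sqrt \<epsilon> + sqrt (1 - \<epsilon>))^2) \<le> E0 W Y 1 \<and>
            E0 W Y 1 \<le> - log 2 ((1 + (1 - C)) / 2)"
    unfolding Let_def C_def[symmetric] \<epsilon>_def[symmetric] bsc[symmetric] bec[symmetric]
    using E0_bounds[OF assms r] unfolding C_def by simp
next
  fix p :: real assume "0 \<le> p \<and> p \<le> 1"
  thus "let C = capacity (bsc p) UNIV; \<epsilon> = bin_entropy_inv (1 - C) in
              E0 (bsc p) UNIV 1 = - log 2 ((1/2) * (sqrt \<epsilon> + sqrt (1 - \<epsilon>))^2)"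
    using bsc_part by blast
next
  fix e :: real assume "0 \<le> e \<and> e \<le> 1"
  thus "let C = capacity (bec e) UNIV in E0 (bec e) UNIV 1 = - log 2 ((1 + (1 - C)) / 2)"
    using bec_part by blast
qed

end
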